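(* Let $S=(X,\prec,\sqsubset)$ be an so-structure. Then the quotient structure $S/{\equiv_\sqsubset}:=\bigl(X/{\equiv_\sqsubset},\hat\prec,\hat\sqsubset\bigr)$ is an so-structure, both $\hat\prec$ and $\hat\sqsubset$ are partial orders on $X/{\equiv_\sqsubset}$, and for all $\alpha,\beta\in X$: (1) $\alpha\prec\beta \iff [\alpha]\,\hat\prec\,[\beta]$; (2) $\alpha\sqsubset\beta \iff [\alpha]\,\hat\sqsubset\,[\beta]\ \vee\ (\alpha\neq\beta\wedge[\alpha]=[\beta])$.
   Context: A stratified order structure (so-structure) is a triple $S=(X,\prec,\sqsubset)$ with $\prec,\sqsubset\subseteq X\times X$ such that for all $\alpha,\beta,\gamma\in X$: (S1) $\neg(\alpha\sqsubset\alpha)$; (S2) $\alpha\prec\beta\Rightarrow\alpha\sqsubset\beta$; (S3) $\alpha\sqsubset\beta\sqsubset\gamma\wedge\alpha\neq\gamma\Rightarrow\alpha\sqsubset\gamma$; (S4) $(\alpha\sqsubset\beta\wedge\beta\prec\gamma)\vee(\alpha\prec\beta\wedge\beta\sqsubset\gamma)\Rightarrow\alpha\prec\gamma$. For an so-structure, define $\alpha\equiv_\sqsubset\beta$ iff $\alpha=\beta$ or ($\alpha\sqsubset\beta$ and $\beta\sqsubset\alpha$); this is an equivalence relation on $X$, $[\alpha]$ denotes the class of $\alpha$, and $X/{\equiv_\sqsubset}$ the set of classes. On $X/{\equiv_\sqsubset}$ define $[\alpha]\,\hat\prec\,[\beta]$ iff $[\alpha]\neq[\beta]$ and $([\alpha]\times[\beta])\cap\prec\neq\emptyset$,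 and $[\alpha]\,\hat\sqsubset\,[\beta]$ iff $[\alpha]\neq[\beta]$ and $([\alpha]\times[\beta])\cap\sqsubset\neq\emptyset$. *)

theory Defs
  imports Main
begin

definition so_structure :: "'a set \<Rightarrow> ('a \<times> 'a) set \<Rightarrow> ('a \<times> 'a) set \<Rightarrow> bool" where
  "so_structure X P Q \<longleftrightarrow>
     P \<subseteq> X \<times> X \<and> Q \<subseteq> X \<times> X \<and>
     (\<forall>a\<in>X. (a, a) \<notin> Q) \<and>
     (\<forall>a\<in>X. \<forall>b\<in>X. (a, b) \<in> P \<longrightarrow> (a, b) \<in> Q) \<and>
     (\<forall>a\<in>X. \<forall>b\<in>X. \<forall>c\<in>X. (a, b) \<in> Q \<and> (b, c) \<in> Q \<and> a \<noteq> c \<longrightarrow> (a, c) \<in> Q) \<and>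
     (\<forall>a\<in>X. \<forall>b\<in>X. \<forall>c\<in>X.
        ((a, b) \<in> Q \<and> (b, c) \<in> P) \<or> ((a, b) \<in> P \<and> (b, c) \<in> Q) \<longrightarrow> (a, c) \<in> P)"

definition so_eq :: "'a set \<Rightarrow> ('a \<times> 'a) set \<Rightarrow> ('a \<times> 'a) set" where
  "so_eq X Q = {(a, b). a \<in> X \<and> b \<in> X \<and> (a = b \<or> ((a, b) \<in> Q \<and> (b, a) \<in> Q))}"

abbreviation so_class :: "'a set \<Rightarrow> ('a \<times> 'a) set \<Rightarrow> 'a \<Rightarrow> 'a set" where
  "so_class X Q a \<equiv> so_eq X Q `` {a}"

abbreviation so_quot :: "'a set \<Rightarrow> ('a \<times> 'a) set \<Rightarrow> 'a set set" where
  "so_quot X Q \<equiv> X // so_eq X Q"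

definition so_lift :: "'a set \<Rightarrow> ('a \<times> 'a) set \<Rightarrow> ('a \<times> 'a) set \<Rightarrow> ('a set \<times> 'a set) set" where
  "so_lift X Q R = {(A, B). A \<in> so_quot X Q \<and> B \<in> so_quot X Q \<and> A \<noteq> B \<and> (A \<times> B) \<inter> R \<noteq> {}}"

definition strict_partial_order_on :: "'b set \<Rightarrow> ('b \<times> 'b) set \<Rightarrow> bool" where
  "strict_partial_order_on Y R \<longleftrightarrow> R \<subseteq> Y \<times> Y \<and> irrefl R \<and> trans R"

end

theory Submission
  imports Defs
begin

lemma soS1: "so_structure X P Q \<Longrightarrow> x\<in>X \<Longrightarrow> (x,x) \<notin> Q"
  unfolding so_structure_def by blast
lemma soS2: "so_structure X P Q \<Longrightarrow> x\<in>X \<Longrightarrow> y\<in>X \<Longrightarrow> (x,y)\<in>P \<Longrightarrow> (x,y)\<in>Q"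
  unfolding so_structure_def by blast
lemma soS3: "so_structure X P Q \<Longrightarrow> x\<in>X \<Longrightarrow> y\<in>X \<Longrightarrow> z\<in>X \<Longrightarrow> (x,y)\<in>Q \<Longrightarrow> (y,z)\<in>Q \<Longrightarrow> x\<noteq>z \<Longrightarrow> (x,z)\<in>Q"
  unfolding so_structure_def by blast
lemma soS4a: "so_structure X P Q \<Longrightarrow> x\<in>X \<Longrightarrow> y\<in>X \<Longrightarrow> z\<in>X \<Longrightarrow> (x,y)\<in>Q \<Longrightarrow> (y,z)\<in>P \<Longrightarrow> (x,z)\<in>P"
  unfolding so_structure_def by blast
lemma soS4b: "so_structure X P Q \<Longrightarrow> x\<in>X \<Longrightarrow> y\<in>X \<Longrightarrow> z\<in>X \<Longrightarrow> (x,y)\<in>P \<Longrightarrow> (y,z)\<in>Q \<Longrightarrow> (x,z)\<in>P"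
  unfolding so_structure_def by blast

lemma so_eqv:
  assumes "so_structure X P Q"
  shows "equiv X (so_eq X Q)"
proof (rule equivI)
  show "refl_on X (so_eq X Q)" "so_eq X Q \<subseteq> X \<times> X" unfolding refl_on_def so_eq_def by blast+
  show "sym (so_eq X Q)" unfolding sym_def so_eq_def by blast
  have s3: "\<And>x y z. x\<in>X \<Longrightarrow> y\<in>X \<Longrightarrow> z\<in>X \<Longrightarrow> (x,y)\<in>Q \<Longrightarrow> (y,z)\<in>Q \<Longrightarrow> x\<noteq>z \<Longrightarrow> (x,z)\<in>Q"
    using assms unfolding so_structure_def by blast
  show "trans (so_eq X Q)"
  proof (rule transI)
    fix x y z assume h: "(x,y) \<in> so_eq X Q" "(y,z) \<in> so_eq X Q"
    then have X: "x\<in>X" "y\<in>X" "z\<in>X" unfolding so_eq_def by blast+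
    show "(x,z) \<in> so_eq X Q"
    proof (cases "x = y \<or> y = z \<or> x = z")
      case True then show ?thesis using X h unfolding so_eq_def by auto
    next
      case False
      then have q: "(x,y)\<in>Q" "(y,x)\<in>Q" "(y,z)\<in>Q" "(z,y)\<in>Q" using h unfolding so_eq_def by auto
      have "(x,z)\<in>Q" using s3[OF X q(1) q(3)] False by blast
      moreover have "(z,x)\<in>Q" using s3[OF X(3) X(2) X(1) q(4) q(2)] False by blast
      ultimately show ?thesis using X unfolding so_eq_def by blast
    qed
  qed
qed

lemma so_memE:
  "(a,b) \<in> so_eq X Q \<Longrightarrow> a \<in> X \<and> b \<in> X \<and> (a = b \<or> ((a, b) \<in> Q \<and> (b, a) \<in> Q))"
  unfolding so_eq_def by blast

lemma so_sym: "so_structure X P Q \<Longrightarrow> (x,y) \<in> so_eq X Q \<Longrightarrow> (y,x) \<in> so_eq X Q"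
  unfolding so_eq_def by blast

lemma so_trans: "so_structure X P Q \<Longrightarrow> (x,y) \<in> so_eq X Q \<Longrightarrow> (y,z) \<in> so_eq X Q \<Longrightarrow> (x,z) \<in> so_eq X Q"
  using so_eqv[of X P Q] unfolding equiv_def by (meson transD)

lemma Q_compat:
  assumes S: "so_structure X P Q"
    and "(a,a') \<in> so_eq X Q" "(b,b') \<in> so_eq X Q" "(a,b) \<in> Q" "(a,b) \<notin> so_eq X Q"
  shows "(a',b') \<in> Q \<and> (a',b') \<notin> so_eq X Q"
proof -
  have E: "equiv X (so_eq X Q)" using so_eqv[OF S] .
  have X: "a \<in> X" "a' \<in> X" "b \<in> X" "b' \<in> X" using so_memE[OF assms(2)] so_memE[OF assms(3)] by simp_all
  have s3: "\<And>x y z. x\<in>X \<Longrightarrow> y\<in>X \<Longrightarrow> z\<in>X \<Longrightarrow> (x,y)\<in>Q \<Longrightarrow> (y,z)\<in>Q \<Longrightarrow> x\<noteq>z \<Longrightarrow> (x,z)\<in>Q"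
    using S unfolding so_structure_def by blast
  have "(a',b) \<in> Q"
  proof (cases "a' = a")
    case True then show ?thesis using assms(4) by simp
  next
    case False
    then have "(a',a) \<in> Q" using so_memE[OF assms(2)] by simp
    moreover have "a' \<noteq> b"
    proof
      assume "a' = b"
      then have "(a,b) \<in> so_eq X Q" using assms(2) by simp
      then show False using assms(5) by simp
    qed
    ultimately show ?thesis using s3[OF X(2) X(1) X(3) _ assms(4)] by simp
  qed
  have na'b: "(a',b) \<notin> so_eq X Q"
  proof
    assume "(a',b) \<in> so_eq X Q"
    with assms(2) have "(a,b) \<in> so_eq X Q" using so_trans[OF S] by blast
    with assms(5) show False by simp
  qed
  have q: "(a',b') \<in> Q"
  proof (cases "b' = b")
    case True then show ?thesis using \<open>(a',b) \<in> Q\<close> by simp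
  next
    case False
    then have "(b,b') \<in> Q" using so_memE[OF assms(3)] False by auto
    moreover have "a' \<noteq> b'"
    proof
      assume "a' = b'"
      then have "(b,a') \<in> so_eq X Q" using assms(3) by simp
      then have "(a',b) \<in> so_eq X Q" using so_sym[OF S] by blast
      then show False using na'b by simp
    qed
    ultimately show ?thesis using s3[OF X(2) X(3) X(4) \<open>(a',b) \<in> Q\<close>] by simp
  qed
  have "(a',b') \<notin> so_eq X Q"
  proof
    assume "(a',b') \<in> so_eq X Q"
    with assms(2,3) have "(a,b) \<in> so_eq X Q" using so_trans[OF S, OF so_trans[OF S, OF assms(2)] so_sym[OF S, OF assms(3)]] by simp
    with assms(5) show False by simp
  qed
  with q show ?thesis by simp
qed

lemma P_notE:
  assumes S: "so_structure X P Q" and "(a,b) \<in> P"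
  shows "(a,b) \<notin> so_eq X Q"
proof
  assume h: "(a,b) \<in> so_eq X Q"
  have X: "a \<in> X" "b \<in> X" using so_memE[OF h] by simp_all
  show False
  proof (cases "a = b")
    case True then show ?thesis using soS1[OF S X(1)] soS2[OF S X(1) X(2) assms(2)] by simp
  next
    case False
    then have "(b,a) \<in> Q" using so_memE[OF h] by simp
    then have "(a,a) \<in> P" using soS4b[OF S X(1) X(2) X(1) assms(2)] by simp
    then show ?thesis using soS1[OF S X(1)] soS2[OF S X(1) X(1)] by simp
  qed
qed

lemma P_compat:
  assumes S: "so_structure X P Q"
    and "(a,a') \<in> so_eq X Q" "(b,b') \<in> so_eq X Q" "(a,b) \<in> P"
  shows "(a',b') \<in> P"
proof -
  have X: "a \<in> X" "a' \<in> X" "b \<in> X" "b' \<in> X" using so_memE[OF assms(2)] so_memE[OF assms(3)] by simp_all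
  have "(a',b) \<in> P"
  proof (cases "a' = a")
    case True then show ?thesis using assms(4) by simp
  next
    case False
    then have "(a',a) \<in> Q" using so_memE[OF assms(2)] by auto
    then show ?thesis using soS4a[OF S X(2) X(1) X(3) _ assms(4)] by simp
  qed
  show ?thesis
  proof (cases "b' = b")
    case True then show ?thesis using \<open>(a',b) \<in> P\<close> by simp
  next
    case False
    then have "(b,b') \<in> Q" using so_memE[OF assms(3)] by auto
    then show ?thesis using soS4b[OF S X(2) X(3) X(4) \<open>(a',b) \<in> P\<close>] by simp
  qed
qed

lemma liftQ_iff:
  assumes S: "so_structure X P Q" and X: "a \<in> X" "b \<in> X"
  shows "(so_class X Q a, so_class X Q b) \<in> so_lift X Q Q \<longleftrightarrow> (a,b) \<in> Q \<and> (a,b) \<notin> so_eq X Q"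
proof -
  have E: "equiv X (so_eq X Q)" using so_eqv[OF S] .
  have ceq: "so_class X Q a = so_class X Q b \<longleftrightarrow> (a,b) \<in> so_eq X Q"
    using eq_equiv_class_iff[OF E X] .
  show ?thesis
  proof
    assume h: "(so_class X Q a, so_class X Q b) \<in> so_lift X Q Q"
    then have ne: "(a,b) \<notin> so_eq X Q" using ceq unfolding so_lift_def by blast
    from h obtain x y where xy: "x \<in> so_class X Q a" "y \<in> so_class X Q b" "(x,y) \<in> Q"
      unfolding so_lift_def by blast
    have xa: "(x,a) \<in> so_eq X Q" "(y,b) \<in> so_eq X Q"
      using xy(1,2) so_sym[OF S] by blast+
    have nxy: "(x,y) \<notin> so_eq X Q"
    proof
      assume "(x,y) \<in> so_eq X Q"
      with xy(1,2) have "(a,b) \<in> so_eq X Q" using so_trans[OF S] so_sym[OF S] by (meson Image_singleton_iff)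
      with ne show False by simp
    qed
    show "(a,b) \<in> Q \<and> (a,b) \<notin> so_eq X Q" using Q_compat[OF S xa xy(3) nxy] .
  next
    assume h: "(a,b) \<in> Q \<and> (a,b) \<notin> so_eq X Q"
    have "a \<in> so_class X Q a" "b \<in> so_class X Q b" using equiv_class_self[OF E] X by blast+
    then show "(so_class X Q a, so_class X Q b) \<in> so_lift X Q Q"
      using h ceq X unfolding so_lift_def by (blast intro: quotientI)
  qed
qed

lemma liftP_iff:
  assumes S: "so_structure X P Q" and X: "a \<in> X" "b \<in> X"
  shows "(so_class X Q a, so_class X Q b) \<in> so_lift X Q P \<longleftrightarrow> (a,b) \<in> P"
proof -
  have E: "equiv X (so_eq X Q)" using so_eqv[OF S] .
  have ceq: "so_class X Q a = so_class X Q b \<longleftrightarrow> (a,b) \<in> so_eq X Q"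
    using eq_equiv_class_iff[OF E X] .
  show ?thesis
  proof
    assume h: "(so_class X Q a, so_class X Q b) \<in> so_lift X Q P"
    from h obtain x y where xy: "x \<in> so_class X Q a" "y \<in> so_class X Q b" "(x,y) \<in> P"
      unfolding so_lift_def by blast
    have xa: "(x,a) \<in> so_eq X Q" "(y,b) \<in> so_eq X Q"
      using xy(1,2) so_sym[OF S] by blast+
    show "(a,b) \<in> P" using P_compat[OF S xa xy(3)] .
  next
    assume h: "(a,b) \<in> P"
    have "a \<in> so_class X Q a" "b \<in> so_class X Q b" using equiv_class_self[OF E] X by blast+
    then show "(so_class X Q a, so_class X Q b) \<in> so_lift X Q P"
      using h ceq X P_notE[OF S h] unfolding so_lift_def by (blast intro: quotientI)
  qed
qed

lemma lift_sub: "so_lift X Q R \<subseteq> so_quot X Q \<times> so_quot X Q"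
  unfolding so_lift_def by blast

theorem mainTheorem1:
  fixes X :: "'a set" and P Q :: "('a \<times> 'a) set"
  assumes "so_structure X P Q"
  shows "so_structure (so_quot X Q) (so_lift X Q P) (so_lift X Q Q)
    \<and> strict_partial_order_on (so_quot X Q) (so_lift X Q P)
    \<and> strict_partial_order_on (so_quot X Q) (so_lift X Q Q)
    \<and> (\<forall>a\<in>X. \<forall>b\<in>X.
         ((a, b) \<in> P \<longleftrightarrow> (so_class X Q a, so_class X Q b) \<in> so_lift X Q P)
       \<and> ((a, b) \<in> Q \<longleftrightarrow> (so_class X Q a, so_class X Q b) \<in> so_lift X Q Q
            \<or> (a \<noteq> b \<and> so_class X Q a = so_class X Q b)))"
proof -
  note S = assms
  have E: "equiv X (so_eq X Q)" using so_eqv[OF S] .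
  let ?E = "so_eq X Q" and ?LP = "so_lift X Q P" and ?LQ = "so_lift X Q Q"
  note s1 = soS1[OF S] and s2 = soS2[OF S] and s3 = soS3[OF S]
  have s4: "\<And>x y z. x\<in>X \<Longrightarrow> y\<in>X \<Longrightarrow> z\<in>X \<Longrightarrow> ((x,y)\<in>Q \<and> (y,z)\<in>P) \<or> ((x,y)\<in>P \<and> (y,z)\<in>Q) \<Longrightarrow> (x,z)\<in>P"
    using soS4a[OF S] soS4b[OF S] by blast
  have ceq: "\<And>a b. a\<in>X \<Longrightarrow> b\<in>X \<Longrightarrow> so_class X Q a = so_class X Q b \<longleftrightarrow> (a,b) \<in> ?E"
    using eq_equiv_class_iff[OF E] by blast
  have Eiff: "\<And>a b. a\<in>X \<Longrightarrow> b\<in>X \<Longrightarrow> (a,b) \<in> ?E \<longleftrightarrow> a = b \<or> ((a,b)\<in>Q \<and> (b,a)\<in>Q)"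
    unfolding so_eq_def by blast
  note LQ = liftQ_iff[OF S] and LP = liftP_iff[OF S]
  have all3: "\<And>R. (\<And>a b c. a\<in>X \<Longrightarrow> b\<in>X \<Longrightarrow> c\<in>X \<Longrightarrow> R (so_class X Q a) (so_class X Q b) (so_class X Q c))
      \<Longrightarrow> \<forall>A\<in>so_quot X Q. \<forall>B\<in>so_quot X Q. \<forall>C\<in>so_quot X Q. R A B C"
    by (auto elim!: quotientE)
  have irrQ: "\<forall>A\<in>so_quot X Q. (A,A) \<notin> ?LQ" unfolding so_lift_def by blast
  have PQ: "\<forall>A\<in>so_quot X Q. \<forall>B\<in>so_quot X Q. (A,B) \<in> ?LP \<longrightarrow> (A,B) \<in> ?LQ"
  proof (intro ballI impI)
    fix A B assume A: "A\<in>so_quot X Q" and B: "B\<in>so_quot X Q" and h: "(A,B) \<in> ?LP"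
    from A obtain a where a: "a\<in>X" "A = so_class X Q a" by (auto elim!: quotientE)
    from B obtain b where b: "b\<in>X" "B = so_class X Q b" by (auto elim!: quotientE)
    have "(a,b) \<in> P" using h a b LP by simp
    then have "(a,b) \<in> Q" "(a,b) \<notin> ?E" using s2[OF a(1) b(1)] P_notE[OF S] by simp_all
    then show "(A,B) \<in> ?LQ" using LQ[OF a(1) b(1)] a b by simp
  qed
  have trQ: "\<forall>A\<in>so_quot X Q. \<forall>B\<in>so_quot X Q. \<forall>C\<in>so_quot X Q. (A,B)\<in>?LQ \<and> (B,C)\<in>?LQ \<and> A\<noteq>C \<longrightarrow> (A,C)\<in>?LQ"
  proof (rule all3, intro impI, elim conjE)
    fix a b c assume X: "a\<in>X" "b\<in>X" "c\<in>X" and h: "(so_class X Q a, so_class X Q b) \<in> ?LQ"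
      "(so_class X Q b, so_class X Q c) \<in> ?LQ" "so_class X Q a \<noteq> so_class X Q c"
    then have "(a,b)\<in>Q" "(b,c)\<in>Q" "(a,c) \<notin> ?E" using LQ ceq by blast+
    then have "(a,c)\<in>Q" using s3 X Eiff by blast
    then show "(so_class X Q a, so_class X Q c) \<in> ?LQ" using LQ X \<open>(a,c) \<notin> ?E\<close> by blast
  qed
  have trP: "\<forall>A\<in>so_quot X Q. \<forall>B\<in>so_quot X Q. \<forall>C\<in>so_quot X Q. ((A,B)\<in>?LQ \<and> (B,C)\<in>?LP) \<or> ((A,B)\<in>?LP \<and> (B,C)\<in>?LQ) \<longrightarrow> (A,C)\<in>?LP"
  proof (rule all3, intro impI)
    fix a b c assume X: "a\<in>X" "b\<in>X" "c\<in>X" and h: "((so_class X Q a, so_class X Q b) \<in> ?LQ \<and> (so_class X Q b, so_class X Q c) \<in> ?LP) \<or> ((so_class X Q a, so_class X Q b) \<in> ?LP \<and> (so_class X Q b, so_class X Q c) \<in> ?LQ)"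
    then have "((a,b)\<in>Q \<and> (b,c)\<in>P) \<or> ((a,b)\<in>P \<and> (b,c)\<in>Q)" using LQ LP by blast
    then have "(a,c)\<in>P" using s4 X by blast
    then show "(so_class X Q a, so_class X Q c) \<in> ?LP" using LP X by blast
  qed
  have irrQ': "irrefl ?LQ" unfolding irrefl_def so_lift_def by blast
  have irrP': "irrefl ?LP" unfolding irrefl_def so_lift_def by blast
  have transQ: "trans ?LQ"
  proof (rule transI)
    fix A B C assume h: "(A,B)\<in>?LQ" "(B,C)\<in>?LQ"
    then have q: "A\<in>so_quot X Q" "B\<in>so_quot X Q" "C\<in>so_quot X Q" using lift_sub by blast+
    have "A \<noteq> C"
    proof
      assume "A = C"
      then have h2: "(B,A) \<in> ?LQ" using h by simp
      from q obtain a b where ab: "a\<in>X" "b\<in>X" "A = so_class X Q a" "B = so_class X Q b"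
        by (auto elim!: quotientE)
      have "(a,b)\<in>Q" "(b,a)\<in>Q" "(a,b)\<notin>?E" using h(1) h2 ab LQ by auto
      then show False using Eiff ab by blast
    qed
    then show "(A,C)\<in>?LQ" using trQ q h by blast
  qed
  have transP: "trans ?LP"
  proof (rule transI)
    fix A B C assume h: "(A,B)\<in>?LP" "(B,C)\<in>?LP"
    then have q: "A\<in>so_quot X Q" "B\<in>so_quot X Q" "C\<in>so_quot X Q" using lift_sub by blast+
    have "(A,B)\<in>?LQ" using PQ q h by blast
    then show "(A,C)\<in>?LP" using trP q h by blast
  qed
  have main: "so_structure (so_quot X Q) ?LP ?LQ"
    unfolding so_structure_def
    by (intro conjI lift_sub irrQ PQ trQ trP)
  have spo: "strict_partial_order_on (so_quot X Q) ?LP" "strict_partial_order_on (so_quot X Q) ?LQ"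
    unfolding strict_partial_order_on_def using lift_sub irrQ' irrP' transQ transP by blast+
  have rel: "\<forall>a\<in>X. \<forall>b\<in>X.
         ((a, b) \<in> P \<longleftrightarrow> (so_class X Q a, so_class X Q b) \<in> ?LP)
       \<and> ((a, b) \<in> Q \<longleftrightarrow> (so_class X Q a, so_class X Q b) \<in> ?LQ
            \<or> (a \<noteq> b \<and> so_class X Q a = so_class X Q b))"
  proof (intro ballI conjI)
    fix a b assume X: "a\<in>X" "b\<in>X"
    show "(a, b) \<in> P \<longleftrightarrow> (so_class X Q a, so_class X Q b) \<in> ?LP" using LP X by blast
    show "(a, b) \<in> Q \<longleftrightarrow> (so_class X Q a, so_class X Q b) \<in> ?LQ
            \<or> (a \<noteq> b \<and> so_class X Q a = so_class X Q b)"
      using LQ[OF X] ceq[OF X] Eiff[OF X] s1 X by blast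
  qed
  show ?thesis using main spo rel by blast
qed

end
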